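(* For integers $m\ge 1$ and $n\ge 0$, define $$\mathcal{C}_{m,n}= m!\left(\prod_{i=1}^{m}\frac{1}{n+i}\right)\binom{(m+1)n}{n,n,\dots,n}=\binom{m+n}{n}^{-1}\binom{(m+1)n}{n,n,\dots,n},$$ where the multinomial coefficient has $m+1$ lower entries all equal to $n$, i.e. equals $\frac{((m+1)n)!}{(n!)^{m+1}}$. Then $\mathcal{C}_{m,n}$ is an integer.
   Context: For $m=1$, $\mathcal{C}_{1,n}$ is the $n$-th Catalan number $\frac{1}{n+1}\binom{2n}{n}$. *)

theory Defs
  imports Complex_Main
begin

definition gen_catalan :: "nat \<Rightarrow> nat \<Rightarrow> rat" where
  "gen_catalan m n =
     of_nat (fact m) * (\<Prod>i=1..m. 1 / of_nat (n + i))
       * (of_nat (fact ((m + 1) * n)) / of_nat (fact n ^ (m + 1)))"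

end

theory Submission imports Defs "HOL-Computational_Algebra.Primes" begin

lemma div_Suc_split: "0 < (d::nat) \<Longrightarrow> Suc k div d = k div d + (if d dvd Suc k then 1 else 0)"
  by (simp add: div_Suc mod_eq_0_iff_dvd)

lemma mult_le_self: assumes "prime (p::nat)" "x > 0" shows "multiplicity p x \<le> x"
proof -
  let ?k = "multiplicity p x"
  have "p ^ ?k dvd x" by (rule multiplicity_dvd)
  hence "p ^ ?k \<le> x" using assms(2) by (rule dvd_imp_le)
  moreover have "?k < 2 ^ ?k" by (rule less_exp)
  moreover have "2 ^ ?k \<le> p ^ ?k" using prime_ge_2_nat[OF assms(1)] by (simp add: power_mono)
  ultimately show ?thesis by linarith
qed

lemma mult_card: assumes "prime (p::nat)" "x > 0" "x \<le> N"
  shows "multiplicity p x = card {j\<in>{1..N}. p ^ j dvd x}"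
proof -
  have "{j\<in>{1..N}. p ^ j dvd x} = {1..multiplicity p x}"
  proof -
    have u: "\<not> is_unit p" using prime_gt_1_nat[OF assms(1)] by simp
    have x0: "x \<noteq> 0" using assms(2) by simp
    have e: "p ^ j dvd x \<longleftrightarrow> j \<le> multiplicity p x" for j
      using power_dvd_iff_le_multiplicity[OF x0 u] .
    show ?thesis using mult_le_self[OF assms(1,2)] assms(3) unfolding e by auto
  qed
  thus ?thesis by simp
qed

lemma legendre: assumes "prime (p::nat)" shows "k \<le> N \<Longrightarrow> multiplicity p (fact k :: nat) = (\<Sum>j=1..N. k div p ^ j)"
proof (induction k)
  case 0
  then show ?case by simp
next
  case (Suc k)
  have pp: "0 < p ^ j" for j using prime_gt_0_nat[OF assms] by simp
  have "multiplicity p (fact (Suc k) :: nat) = multiplicity p (Suc k) + multiplicity p (fact k :: nat)"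
  proof -
    have "(fact (Suc k) :: nat) = Suc k * fact k" using fact_Suc[of k] by simp
    moreover have "(fact k :: nat) \<noteq> 0" by simp
    moreover have "multiplicity p (Suc k * (fact k :: nat)) = multiplicity p (Suc k) + multiplicity p (fact k :: nat)"
      using prime_elem_multiplicity_mult_distrib[of p "Suc k" "fact k :: nat"] assms by simp
    ultimately show ?thesis by simp
  qed
  also have "\<dots> = card {j\<in>{1..N}. p ^ j dvd Suc k} + (\<Sum>j=1..N. k div p ^ j)"
    using Suc mult_card[OF assms, of "Suc k" N] by simp
  also have "card {j\<in>{1..N}. p ^ j dvd Suc k} = (\<Sum>j=1..N. if p ^ j dvd Suc k then 1 else 0)"
    by (simp add: sum.inter_filter[symmetric])
  also have "\<dots> + (\<Sum>j=1..N. k div p ^ j) = (\<Sum>j=1..N. Suc k div p ^ j)"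
    by (simp add: div_Suc_split[OF pp] sum.distrib)
  finally show ?case .
qed

lemma key: assumes "(q::nat) > 0" shows "m*(n div q) + (m+n) div q \<le> ((m+1)*n) div q + m div q"
proof (cases "n mod q = 0")
  case True
  then obtain a where n: "n = q * a" by auto
  have "(m + q*a) div q = m div q + a" using assms by simp
  moreover have "((m+1)*(q*a)) div q = (m+1)*a" using assms by simp
  moreover have "(q*a) div q = a" using assms by simp
  ultimately show ?thesis using n by (simp add: algebra_simps)
next
  case False
  define a where "a = n div q"
  define r where "r = n mod q"
  have n: "n = a*q + r" by (simp add: a_def r_def)
  have r: "r \<ge> 1" using False r_def by simp
  have "(m+1)*n \<ge> (m+n) + (m*a)*q"
  proof -
    have "(m+1)*n = m*a*q + m*r + n" by (simp add: n algebra_simps)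
    moreover have "m*r \<ge> m" using r by simp
    ultimately show ?thesis by simp
  qed
  hence "((m+n) + (m*a)*q) div q \<le> ((m+1)*n) div q" by (rule div_le_mono)
  moreover have "((m+n) + (m*a)*q) div q = (m+n) div q + m*a" using assms by simp
  ultimately show ?thesis by (simp add: a_def)
qed

lemma prod_fact: "(\<Prod>i=1..m. of_nat (n+i) :: rat) * fact n = fact (m+n)"
proof (induction m)
  case 0 then show ?case by simp
next
  case (Suc m)
  have "(\<Prod>i=1..Suc m. of_nat (n+i) :: rat) = (\<Prod>i=1..m. of_nat (n+i)) * of_nat (n + Suc m)"
    by (simp add: prod.atLeast1_atMost_eq)
  hence "(\<Prod>i=1..Suc m. of_nat (n+i) :: rat) * fact n = of_nat (n + Suc m) * ((\<Prod>i=1..m. of_nat (n+i)) * fact n)"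
    by (simp only: mult_ac)
  also have "\<dots> = of_nat (Suc (m+n)) * fact (m+n)" using Suc by simp
  also have "\<dots> = fact (Suc m + n)" by (simp only: fact_Suc add_Suc)
  finally show ?case .
qed

lemma dvd_main: "fact n ^ m * fact (m+n) dvd (fact ((m+1)*n) * fact m :: nat)"
proof (rule multiplicity_le_imp_dvd)
  show "fact n ^ m * fact (m+n) \<noteq> (0::nat)" by simp
  fix p :: nat assume p: "prime p"
  define N where "N = (m+1)*n + m + n"
  have pe: "prime_elem p" using p by simp
  have pp: "0 < p ^ j" for j using prime_gt_0_nat[OF p] by simp
  have "multiplicity p (fact n ^ m * fact (m+n) :: nat) = m * multiplicity p (fact n :: nat) + multiplicity p (fact (m+n) :: nat)"
    using pe by (simp add: prime_elem_multiplicity_mult_distrib prime_elem_multiplicity_power_distrib)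
  also have "\<dots> = (\<Sum>j=1..N. m * (n div p^j) + (m+n) div p^j)"
    using legendre[OF p, of n N] legendre[OF p, of "m+n" N] by (simp add: N_def sum.distrib sum_distrib_left)
  also have "\<dots> \<le> (\<Sum>j=1..N. ((m+1)*n) div p^j + m div p^j)"
    by (rule sum_mono) (rule key[OF pp])
  also have "\<dots> = multiplicity p (fact ((m+1)*n) :: nat) + multiplicity p (fact m :: nat)"
    using legendre[OF p, of "(m+1)*n" N] legendre[OF p, of m N] by (simp add: N_def sum.distrib)
  also have "\<dots> = multiplicity p (fact ((m+1)*n) * fact m :: nat)"
    using pe by (simp add: prime_elem_multiplicity_mult_distrib)
  finally show "multiplicity p (fact n ^ m * fact (m+n) :: nat) \<le> multiplicity p (fact ((m+1)*n) * fact m :: nat)" .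
qed

theorem mainTheorem9:
  fixes m n :: nat
  assumes "m \<ge> 1"
  shows "gen_catalan m n \<in> \<int>"
proof -
  obtain c where c: "fact ((m+1)*n) * fact m = (fact n ^ m * fact (m+n) :: nat) * c"
    using dvd_main[of n m] by (elim dvdE)
  have P: "(\<Prod>i=1..m. of_nat (n+i) :: rat) = fact (m+n) / fact n"
    using prod_fact[where m=m and n=n] by (simp add: field_simps)
  have "gen_catalan m n = fact m * (1 / (fact (m+n) / fact n)) * (fact ((m+1)*n) / fact n ^ (m+1))"
  proof -
    have Q: "(\<Prod>i=1..m. 1 / of_nat (n+i) :: rat) = 1 / (\<Prod>i=1..m. of_nat (n+i))"
      by (simp add: prod_dividef)
    show ?thesis unfolding gen_catalan_def Q P of_nat_fact of_nat_power by (rule refl)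
  qed
  also have "\<dots> = of_nat (fact ((m+1)*n) * fact m) / of_nat (fact n ^ m * fact (m+n))"
    by (simp add: field_simps)
  also have "\<dots> = of_nat c" unfolding c by simp
  finally show ?thesis by simp
qed
end
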